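(* Let $X$ be an unbounded connected coarse space. The following are equivalent: (1) $X$ is thin; (2) the coarse hyperspace $\mathcal{M}'\text{-}\exp X$ is connected, where $\mathcal{M}'(X)$ is the family of all non-empty meshy subsets of $X$; (3) the map $c_X\colon X\to\exp X$, $c_X(x)=X\setminus\{x\}$, is an asymorphic embedding.
   Context: Coarse structure $\mathcal{C}_X$: family of subsets of $X\times X$ containing the diagonal, closed under subsets, finite unions, inverses, compositions; connected if every singleton $\{(x,y)\}$ is controlled; bounded sets: $B$ with $B\times B\in\mathcal{C}_X$. $A\subseteq X$ is meshy if $\{x\in X:E[x]\subseteq A\}=\varnothing$ for some $E\in\mathcal{C}_X$. $X$ is thin if for every $E\in\mathcal{C}_X$ there is a bounded $B$ with $E[x]\cap E[y]=\varnothing$ for all distinct $x,y\in X\setminus B$. $\exp E=\{(A,B)\in\mathcal{P}(X)^2:A\subseteq E[B],\ B\subseteq E[A]\}$; $\exp X$ is $\mathcal{P}(X)$ with the coarse structure generated by $\{\exp E:E\in\mathcal{C}_X\}$; for $\mathcal{A}(X)\subseteq\mathcal{P}(X)$, $\mathcal{A}\text{-}\exp X$ is the subspace $\mathcal{A}(X)$ with restricted coarse structure. An asymorphic embedding is an injective map that is a bornologous bijection onto its image with bornologous inverse (bornologous: images of controlled sets under $f\times f$ are controlled). *)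

theory Defs
  imports Main
begin

definition coarse_structure :: "'a set \<Rightarrow> ('a \<times> 'a) set set \<Rightarrow> bool" where
  "coarse_structure X C \<longleftrightarrow>
     (\<forall>E\<in>C. E \<subseteq> X \<times> X) \<and>
     Id_on X \<in> C \<and>
     (\<forall>E\<in>C. \<forall>F. F \<subseteq> E \<longrightarrow> F \<in> C) \<and>
     (\<forall>E\<in>C. \<forall>F\<in>C. E \<union> F \<in> C) \<and>
     (\<forall>E\<in>C. E\<inverse> \<in> C) \<and>
     (\<forall>E\<in>C. \<forall>F\<in>C. E O F \<in> C)"

definition coarse_connected :: "'a set \<Rightarrow> ('a \<times> 'a) set set \<Rightarrow> bool" where
  "coarse_connected X C \<longleftrightarrow> (\<forall>x\<in>X. \<forall>y\<in>X. {(x, y)} \<in> C)"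

definition cbounded :: "'a set \<Rightarrow> ('a \<times> 'a) set set \<Rightarrow> 'a set \<Rightarrow> bool" where
  "cbounded X C B \<longleftrightarrow> B \<subseteq> X \<and> B \<times> B \<in> C"

definition meshy :: "'a set \<Rightarrow> ('a \<times> 'a) set set \<Rightarrow> 'a set \<Rightarrow> bool" where
  "meshy X C A \<longleftrightarrow> A \<subseteq> X \<and> (\<exists>E\<in>C. {x\<in>X. E `` {x} \<subseteq> A} = {})"

definition thin :: "'a set \<Rightarrow> ('a \<times> 'a) set set \<Rightarrow> bool" where
  "thin X C \<longleftrightarrow> (\<forall>E\<in>C. \<exists>B. cbounded X C B \<and>
      (\<forall>x\<in>X - B. \<forall>y\<in>X - B. x \<noteq> y \<longrightarrow> E `` {x} \<inter> E `` {y} = {}))"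

definition coarse_generated :: "'a set \<Rightarrow> ('a \<times> 'a) set set \<Rightarrow> ('a \<times> 'a) set set" where
  "coarse_generated S G = \<Inter>{D. coarse_structure S D \<and> G \<subseteq> D}"

definition expE :: "'a set \<Rightarrow> ('a \<times> 'a) set \<Rightarrow> ('a set \<times> 'a set) set" where
  "expE X E = {(A, B). A \<subseteq> X \<and> B \<subseteq> X \<and> A \<subseteq> E `` B \<and> B \<subseteq> E `` A}"

definition exp_coarse :: "'a set \<Rightarrow> ('a \<times> 'a) set set \<Rightarrow> ('a set \<times> 'a set) set set" where
  "exp_coarse X C = coarse_generated (Pow X) (expE X ` C)"

definition subspace_coarse :: "('a \<times> 'a) set set \<Rightarrow> 'a set \<Rightarrow> ('a \<times> 'a) set set" where
  "subspace_coarse C Y = {E \<in> C. E \<subseteq> Y \<times> Y}"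

definition meshy_family :: "'a set \<Rightarrow> ('a \<times> 'a) set set \<Rightarrow> 'a set set" where
  "meshy_family X C = {A. A \<noteq> {} \<and> meshy X C A}"

definition bornologous :: "'a set \<Rightarrow> ('a \<times> 'a) set set \<Rightarrow> ('b \<times> 'b) set set \<Rightarrow> ('a \<Rightarrow> 'b) \<Rightarrow> bool" where
  "bornologous X C D f \<longleftrightarrow> (\<forall>E\<in>C. (\<lambda>(x, y). (f x, f y)) ` E \<in> D)"

definition asymorphic_embedding ::
  "'a set \<Rightarrow> ('a \<times> 'a) set set \<Rightarrow> 'b set \<Rightarrow> ('b \<times> 'b) set set \<Rightarrow> ('a \<Rightarrow> 'b) \<Rightarrow> bool" where
  "asymorphic_embedding X C Y D f \<longleftrightarrow>
     f ` X \<subseteq> Y \<and> inj_on f X \<and> bornologous X C D f \<and>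
     (\<forall>F\<in>subspace_coarse D (f ` X).
        (\<lambda>(u, v). (the_inv_into X f u, the_inv_into X f v)) ` F \<in> C)"

end

theory Submission imports Defs begin

locale cs =
  fixes X :: "'a set" and C :: "('a \<times> 'a) set set"
  assumes cs: "coarse_structure X C"
begin

lemma csu: "(\<forall>E\<in>C. E \<subseteq> X \<times> X) \<and>
     Id_on X \<in> C \<and>
     (\<forall>E\<in>C. \<forall>F. F \<subseteq> E \<longrightarrow> F \<in> C) \<and>
     (\<forall>E\<in>C. \<forall>F\<in>C. E \<union> F \<in> C) \<and>
     (\<forall>E\<in>C. E\<inverse> \<in> C) \<and>
     (\<forall>E\<in>C. \<forall>F\<in>C. E O F \<in> C)" using cs unfolding coarse_structure_def .

lemma sub: "E \<in> C \<Longrightarrow> E \<subseteq> X \<times> X" using csu by simp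
lemma idC: "Id_on X \<in> C" using csu by simp
lemma down: "E \<in> C \<Longrightarrow> F \<subseteq> E \<Longrightarrow> F \<in> C" using csu by simp
lemma un: "E \<in> C \<Longrightarrow> F \<in> C \<Longrightarrow> E \<union> F \<in> C" using csu by simp
lemma cv: "E \<in> C \<Longrightarrow> E\<inverse> \<in> C" using csu by simp
lemma cmp: "E \<in> C \<Longrightarrow> F \<in> C \<Longrightarrow> E O F \<in> C" using csu by simp

lemma emptyC: "{} \<in> C" using down[OF idC] by blast

lemma bdd_sub: assumes "cbounded X C B" "D \<subseteq> B" shows "cbounded X C D"
proof -
  have "D \<times> D \<subseteq> B \<times> B" using assms(2) by blast
  thus ?thesis using assms down[of "B \<times> B" "D \<times> D"] unfolding cbounded_def by blast
qed

lemma bdd_img: assumes "cbounded X C B" "G \<in> C" shows "cbounded X C (G `` B)"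
proof -
  have "B \<times> B \<in> C" using assms unfolding cbounded_def by auto
  hence "G\<inverse> O (B \<times> B) O G \<in> C" by (intro cmp cv assms(2) \<open>B \<times> B \<in> C\<close>)
  moreover have "(G `` B) \<times> (G `` B) \<subseteq> G\<inverse> O (B \<times> B) O G" by blast
  moreover have "G `` B \<subseteq> X" using sub[OF assms(2)] by blast
  ultimately show ?thesis unfolding cbounded_def using down[of "G\<inverse> O (B \<times> B) O G"] by blast
qed

definition T where "T G = {x\<in>X. \<exists>w\<in>X. w \<noteq> x \<and> (w, x) \<in> G}"

definition Tb where "Tb \<longleftrightarrow> (\<forall>G\<in>C. cbounded X C (T G))"

lemma exp_char: "F \<in> exp_coarse X C \<longleftrightarrow> (\<exists>G\<in>C. F \<subseteq> expE X G)"
proof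
  assume "\<exists>G\<in>C. F \<subseteq> expE X G"
  then obtain G where G: "G \<in> C" "F \<subseteq> expE X G" by blast
  show "F \<in> exp_coarse X C"
    unfolding exp_coarse_def coarse_generated_def
  proof (rule InterI)
    fix D assume "D \<in> {D. coarse_structure (Pow X) D \<and> expE X ` C \<subseteq> D}"
    hence "coarse_structure (Pow X) D" "expE X G \<in> D" using G by auto
    thus "F \<in> D" using G unfolding coarse_structure_def by blast
  qed
next
  let ?D = "{F. \<exists>G\<in>C. F \<subseteq> expE X G}"
  have mono: "G \<subseteq> H \<Longrightarrow> expE X G \<subseteq> expE X H" for G H
  proof
    fix p assume "G \<subseteq> H" "p \<in> expE X G"
    moreover have "G `` B \<subseteq> H `` B" for B using \<open>G \<subseteq> H\<close> by blast
    ultimately show "p \<in> expE X H" unfolding expE_def by (auto 0 3)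
  qed
  have "coarse_structure (Pow X) ?D"
    unfolding coarse_structure_def
  proof (intro conjI ballI allI impI)
    fix E assume "E \<in> ?D" thus "E \<subseteq> Pow X \<times> Pow X" unfolding expE_def by auto
  next
    show "Id_on (Pow X) \<in> ?D" using idC unfolding expE_def by (intro CollectI bexI[of _ "Id_on X"]) auto
  next
    fix E F assume "E \<in> ?D" "F \<subseteq> E" thus "F \<in> ?D" by blast
  next
    fix E F assume "E \<in> ?D" "F \<in> ?D"
    then obtain G H where "G \<in> C" "H \<in> C" "E \<subseteq> expE X G" "F \<subseteq> expE X H" by blast
    thus "E \<union> F \<in> ?D" using un[of G H] mono[of G "G \<union> H"] mono[of H "G \<union> H"] by blast
  next
    fix E assume "E \<in> ?D"
    then obtain G where "G \<in> C" "E \<subseteq> expE X G" by blast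
    moreover have "(expE X G)\<inverse> = expE X G" unfolding expE_def by auto
    ultimately show "E\<inverse> \<in> ?D" by blast
  next
    fix E F assume "E \<in> ?D" "F \<in> ?D"
    then obtain G H where GH: "G \<in> C" "H \<in> C" "E \<subseteq> expE X G" "F \<subseteq> expE X H" by blast
    have "E O F \<subseteq> expE X (G O H \<union> H O G)"
    proof
      fix p assume "p \<in> E O F"
      then obtain A B D where p: "p = (A, D)" "(A, B) \<in> expE X G" "(B, D) \<in> expE X H" using GH by blast
      have e: "A \<subseteq> G `` B" "B \<subseteq> G `` A" "B \<subseteq> H `` D" "D \<subseteq> H `` B" "A \<subseteq> X" "D \<subseteq> X"
        using p unfolding expE_def by auto
      have "A \<subseteq> G `` (H `` D)" using e(1,3) Image_mono[OF order_refl, of B "H `` D" G] by blast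
      moreover have "G `` (H `` D) = (H O G) `` D" by blast
      moreover have "D \<subseteq> H `` (G `` A)" using e(2,4) Image_mono[OF order_refl, of B "G `` A" H] by blast
      moreover have "H `` (G `` A) = (G O H) `` A" by blast
      ultimately have 1: "A \<subseteq> (H O G) `` D" "D \<subseteq> (G O H) `` A" by simp_all
      have "(H O G) `` D \<subseteq> (G O H \<union> H O G) `` D" "(G O H) `` A \<subseteq> (G O H \<union> H O G) `` A"
        by (rule Image_mono; blast)+
      hence "A \<subseteq> (G O H \<union> H O G) `` D" "D \<subseteq> (G O H \<union> H O G) `` A" using 1 by (meson order_trans)+
      thus "p \<in> expE X (G O H \<union> H O G)" using p(1) e(5,6) unfolding expE_def by blast
    qed
    moreover have "G O H \<union> H O G \<in> C" by (intro un cmp GH(1,2))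
    ultimately show "E O F \<in> ?D" by blast
  qed
  moreover have "expE X ` C \<subseteq> ?D" by blast
  ultimately have "exp_coarse X C \<subseteq> ?D"
    unfolding exp_coarse_def coarse_generated_def by blast
  thus "F \<in> exp_coarse X C \<Longrightarrow> \<exists>G\<in>C. F \<subseteq> expE X G" by blast
qed

lemma T_sub: "T G \<subseteq> X" unfolding T_def by auto

lemma thin_Tb: "thin X C \<Longrightarrow> Tb"
  unfolding Tb_def
proof
  fix G assume th: "thin X C" and G: "G \<in> C"
  let ?H = "G \<union> G\<inverse> \<union> Id_on X"
  have H: "?H \<in> C" by (intro un cv idC G)
  then obtain B where B: "cbounded X C B"
    and dis: "\<forall>x\<in>X - B. \<forall>y\<in>X - B. x \<noteq> y \<longrightarrow> ?H `` {x} \<inter> ?H `` {y} = {}"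
    using th unfolding thin_def by blast
  have "T G \<subseteq> ?H `` B"
  proof
    fix x assume "x \<in> T G"
    then obtain w where w: "x \<in> X" "w \<in> X" "w \<noteq> x" "(w, x) \<in> G" unfolding T_def by blast
    show "x \<in> ?H `` B"
    proof (cases "x \<in> B")
      case True thus ?thesis using w by blast
    next
      case False
      show ?thesis
      proof (cases "w \<in> B")
        case True thus ?thesis using w by blast
      next
        case False
        have "x \<in> ?H `` {w} \<inter> ?H `` {x}" using w by blast
        thus ?thesis using dis w False \<open>x \<notin> B\<close> by blast
      qed
    qed
  qed
  thus "cbounded X C (T G)" using bdd_sub[OF bdd_img[OF B H]] by blast
qed

lemma Tb_thin: "Tb \<Longrightarrow> thin X C"
  unfolding thin_def
proof
  fix E assume tb: Tb and E: "E \<in> C"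
  let ?G = "E O E\<inverse>"
  have "?G \<in> C" by (intro cmp cv E)
  hence B: "cbounded X C (T ?G)" using tb unfolding Tb_def by blast
  have "\<forall>x\<in>X - T ?G. \<forall>y\<in>X - T ?G. x \<noteq> y \<longrightarrow> E `` {x} \<inter> E `` {y} = {}"
  proof (intro ballI impI)
    fix x y assume xy: "x \<in> X - T ?G" "y \<in> X - T ?G" "x \<noteq> y"
    show "E `` {x} \<inter> E `` {y} = {}"
    proof (rule ccontr)
      assume "E `` {x} \<inter> E `` {y} \<noteq> {}"
      then obtain z where "(x, z) \<in> E" "(y, z) \<in> E" by blast
      hence "(x, y) \<in> ?G" by blast
      hence "y \<in> T ?G" using xy unfolding T_def by blast
      thus False using xy by blast
    qed
  qed
  thus "\<exists>B. cbounded X C B \<and> (\<forall>x\<in>X - B. \<forall>y\<in>X - B. x \<noteq> y \<longrightarrow> E `` {x} \<inter> E `` {y} = {})"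
    using B by blast
qed

abbreviation c where "c \<equiv> (\<lambda>x. X - {x})"

lemma c_inj: "inj_on c X" unfolding inj_on_def by blast

lemma c_born: "bornologous X C (exp_coarse X C) c"
  unfolding bornologous_def
proof
  fix E assume E: "E \<in> C"
  let ?G = "E \<union> E\<inverse> \<union> Id_on X"
  have G: "?G \<in> C" by (intro un cv idC E)
  have "(\<lambda>(x, y). (c x, c y)) ` E \<subseteq> expE X ?G"
  proof
    fix p assume "p \<in> (\<lambda>(x, y). (c x, c y)) ` E"
    then obtain x y where p: "p = (c x, c y)" "(x, y) \<in> E" by auto
    have xy: "x \<in> X" "y \<in> X" using p sub[OF E] by auto
    have "c x \<subseteq> ?G `` c y"
    proof
      fix z assume z: "z \<in> c x"
      show "z \<in> ?G `` c y"
      proof (cases "z = y")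
        case True thus ?thesis using z p xy by blast
      next
        case False thus ?thesis using z by blast
      qed
    qed
    moreover have "c y \<subseteq> ?G `` c x"
    proof
      fix z assume z: "z \<in> c y"
      show "z \<in> ?G `` c x"
      proof (cases "z = x")
        case True thus ?thesis using z p xy by blast
      next
        case False thus ?thesis using z by blast
      qed
    qed
    ultimately show "p \<in> expE X ?G" using p unfolding expE_def by auto
  qed
  thus "(\<lambda>(x, y). (c x, c y)) ` E \<in> exp_coarse X C" using exp_char G by blast
qed

lemma inv_c: "x \<in> X \<Longrightarrow> the_inv_into X c (c x) = x"
  using the_inv_into_f_f[OF c_inj] by blast

lemma asym_Tb: "asymorphic_embedding X C (Pow X) (exp_coarse X C) c \<Longrightarrow> Tb"
  unfolding Tb_def
proof
  fix G assume as: "asymorphic_embedding X C (Pow X) (exp_coarse X C) c" and G: "G \<in> C"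
  let ?H = "G \<union> Id_on X"
  have H: "?H \<in> C" by (intro un idC G)
  let ?F = "(\<lambda>(x, y). (c x, c y)) ` (T G \<times> T G)"
  have "?F \<subseteq> expE X ?H"
  proof
    fix p assume "p \<in> ?F"
    then obtain x y where p: "p = (c x, c y)" "x \<in> T G" "y \<in> T G" by auto
    have "c x \<subseteq> ?H `` c y"
    proof
      fix z assume z: "z \<in> c x"
      show "z \<in> ?H `` c y"
      proof (cases "z = y")
        case True thus ?thesis using p unfolding T_def by blast
      next
        case False thus ?thesis using z by blast
      qed
    qed
    moreover have "c y \<subseteq> ?H `` c x"
    proof
      fix z assume z: "z \<in> c y"
      show "z \<in> ?H `` c x"
      proof (cases "z = x")
        case True thus ?thesis using p unfolding T_def by blast
      next
        case False thus ?thesis using z by blast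
      qed
    qed
    ultimately show "p \<in> expE X ?H" using p unfolding expE_def by auto
  qed
  hence "?F \<in> exp_coarse X C" using exp_char H by blast
  moreover have "?F \<subseteq> c ` X \<times> c ` X" using T_sub[of G] by auto
  ultimately have "?F \<in> subspace_coarse (exp_coarse X C) (c ` X)"
    unfolding subspace_coarse_def by blast
  hence "(\<lambda>(u, v). (the_inv_into X c u, the_inv_into X c v)) ` ?F \<in> C"
    using as unfolding asymorphic_embedding_def by blast
  moreover have "(\<lambda>(u, v). (the_inv_into X c u, the_inv_into X c v)) ` ?F = T G \<times> T G"
  proof -
    have "(\<lambda>(u, v). (the_inv_into X c u, the_inv_into X c v)) ` ?F
       = (\<lambda>(x, y). (the_inv_into X c (c x), the_inv_into X c (c y))) ` (T G \<times> T G)"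
      by (simp add: image_image case_prod_beta)
    also have "\<dots> = (\<lambda>(x, y). (x, y)) ` (T G \<times> T G)"
      using inv_c T_sub by (intro image_cong) auto
    finally show ?thesis by simp
  qed
  ultimately show "cbounded X C (T G)" using T_sub unfolding cbounded_def by simp
qed

lemma Tb_asym: "Tb \<Longrightarrow> asymorphic_embedding X C (Pow X) (exp_coarse X C) c"
  unfolding asymorphic_embedding_def
proof (intro conjI c_inj c_born ballI)
  show "c ` X \<subseteq> Pow X" by blast
next
  fix F assume tb: Tb and F: "F \<in> subspace_coarse (exp_coarse X C) (c ` X)"
  then obtain G where G: "G \<in> C" "F \<subseteq> expE X G" and Fs: "F \<subseteq> c ` X \<times> c ` X"
    using exp_char unfolding subspace_coarse_def by blast
  have TG: "T G \<times> T G \<in> C" using tb G unfolding Tb_def cbounded_def by blast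
  let ?H = "G \<union> Id_on X \<union> T G \<times> T G"
  have H: "?H \<in> C" by (intro un idC G TG)
  have "(\<lambda>(u, v). (the_inv_into X c u, the_inv_into X c v)) ` F \<subseteq> ?H"
  proof
    fix q assume "q \<in> (\<lambda>(u, v). (the_inv_into X c u, the_inv_into X c v)) ` F"
    then obtain u v where uv: "(u, v) \<in> F" "q = (the_inv_into X c u, the_inv_into X c v)" by auto
    then obtain x y where xy: "x \<in> X" "y \<in> X" "u = c x" "v = c y" using Fs by blast
    hence q: "q = (x, y)" using uv inv_c by simp
    have e: "c x \<subseteq> G `` c y" "c y \<subseteq> G `` c x" using uv G xy unfolding expE_def by auto
    show "q \<in> ?H"
    proof (cases "x = y")
      case True have "q \<in> Id_on X" using q xy(1) True by (simp add: Id_onI)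
      thus ?thesis by (rule UnI1[OF UnI2])
    next
      case False
      have "y \<in> c x" using False xy by blast
      hence "y \<in> G `` c y" using e(1) by blast
      then obtain w where w: "w \<in> X" "w \<noteq> y" "(w, y) \<in> G" by blast
      have ty: "y \<in> T G" using xy w unfolding T_def by blast
      have "x \<in> c y" using False xy by blast
      hence "x \<in> G `` c x" using e(2) by blast
      then obtain w' where w': "w' \<in> X" "w' \<noteq> x" "(w', x) \<in> G" by blast
      have tx: "x \<in> T G" using xy w' unfolding T_def by blast
      show ?thesis using q tx ty by simp
    qed
  qed
  thus "(\<lambda>(u, v). (the_inv_into X c u, the_inv_into X c v)) ` F \<in> C" using down[OF H] by blast
qed


lemma meshy_bdd: assumes tb: Tb and m: "meshy X C A" shows "cbounded X C A"
proof -
  obtain E where E: "E \<in> C" "{x\<in>X. E `` {x} \<subseteq> A} = {}" and AX: "A \<subseteq> X"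
    using m unfolding meshy_def by blast
  have "A \<subseteq> T (E\<inverse>)"
  proof
    fix x assume x: "x \<in> A"
    hence "\<not> E `` {x} \<subseteq> A" using E AX by blast
    then obtain z where z: "(x, z) \<in> E" "z \<notin> A" by blast
    have "(z, x) \<in> E\<inverse>" "z \<in> X" "z \<noteq> x" "x \<in> X" using z x AX sub[OF E(1)] by auto
    thus "x \<in> T (E\<inverse>)" unfolding T_def by blast
  qed
  moreover have "cbounded X C (T (E\<inverse>))" using tb cv[OF E(1)] unfolding Tb_def by blast
  ultimately show ?thesis using bdd_sub by blast
qed

lemma Tb_conn: assumes tb: Tb and cc: "coarse_connected X C"
  shows "coarse_connected (meshy_family X C) (subspace_coarse (exp_coarse X C) (meshy_family X C))"
  unfolding coarse_connected_def
proof (intro ballI)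
  fix A B assume A: "A \<in> meshy_family X C" and B: "B \<in> meshy_family X C"
  have bA: "cbounded X C A" and bB: "cbounded X C B"
    using A B meshy_bdd tb unfolding meshy_family_def by auto
  obtain a b where ab: "a \<in> A" "b \<in> B" using A B unfolding meshy_family_def by blast
  have abX: "a \<in> X" "b \<in> X" using ab bA bB unfolding cbounded_def by auto
  let ?H = "(B \<times> B) O {(b, a)} O (A \<times> A)"
  have ba: "{(b, a)} \<in> C" using cc abX unfolding coarse_connected_def by blast
  have AA: "A \<times> A \<in> C" "B \<times> B \<in> C" using bA bB unfolding cbounded_def by auto
  have H0: "?H \<in> C" by (intro cmp ba AA)
  have H: "?H \<union> ?H\<inverse> \<in> C" by (intro un cv H0)
  have "(A, B) \<in> expE X (?H \<union> ?H\<inverse>)"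
    unfolding expE_def using ab bA bB unfolding cbounded_def by blast
  hence "{(A, B)} \<in> exp_coarse X C" using exp_char H by blast
  thus "{(A, B)} \<in> subspace_coarse (exp_coarse X C) (meshy_family X C)"
    using A B unfolding subspace_coarse_def by blast
qed

lemma conn_Tb: assumes cc: "coarse_connected X C" and ub: "\<not> cbounded X C X"
  and mc: "coarse_connected (meshy_family X C) (subspace_coarse (exp_coarse X C) (meshy_family X C))"
  shows Tb
  unfolding Tb_def
proof
  fix G assume G: "G \<in> C"
  let ?F = "G \<union> G\<inverse>"
  have F: "?F \<in> C" by (intro un cv G)
  have Fs: "?F \<subseteq> X \<times> X" using sub[OF F] .
  let ?S = "{x\<in>X. \<exists>w\<in>X. w \<noteq> x \<and> (w, x) \<in> ?F}"
  have TS: "T G \<subseteq> ?S" unfolding T_def by blast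
  let ?Ind = "{I. I \<subseteq> ?S \<and> (\<forall>x\<in>I. \<forall>y\<in>I. (x, y) \<in> ?F \<longrightarrow> x = y)}"
  have "\<forall>Ch\<in>chains ?Ind. \<Union>Ch \<in> ?Ind"
  proof
    fix Ch assume ch: "Ch \<in> chains ?Ind"
    have "\<Union>Ch \<subseteq> ?S" using chainsD2[OF ch] by blast
    moreover have "\<forall>x\<in>\<Union>Ch. \<forall>y\<in>\<Union>Ch. (x, y) \<in> ?F \<longrightarrow> x = y"
    proof (intro ballI impI)
      fix x y assume "x \<in> \<Union>Ch" "y \<in> \<Union>Ch" "(x, y) \<in> ?F"
      then obtain I J where IJ: "I \<in> Ch" "J \<in> Ch" "x \<in> I" "y \<in> J" "(x, y) \<in> ?F" by blast
      from chainsD[OF ch IJ(1,2)] have "I \<subseteq> J \<or> J \<subseteq> I" .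
      moreover have "I \<in> ?Ind" "J \<in> ?Ind" using chainsD2[OF ch] IJ by auto
      ultimately show "x = y" using IJ by blast
    qed
    ultimately show "\<Union>Ch \<in> ?Ind" by blast
  qed
  from Zorn_Lemma[OF this] obtain I where I: "I \<in> ?Ind"
    and max: "\<forall>J\<in>?Ind. I \<subseteq> J \<longrightarrow> J = I" by blast
  let ?A = "?S - I"
  have cover: "?S \<subseteq> (?F \<union> Id_on X) `` ?A"
  proof
    fix x assume x: "x \<in> ?S"
    show "x \<in> (?F \<union> Id_on X) `` ?A"
    proof (cases "x \<in> I")
      case False
      hence xA: "x \<in> ?A" using x by blast
      have "(x, x) \<in> ?F \<union> Id_on X" using x by (intro UnI2 Id_onI) blast
      thus ?thesis using xA by (rule ImageI)
    next
      case True
      from x obtain w where w: "w \<in> X" "w \<noteq> x" "(w, x) \<in> ?F" by blast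
      have indI: "\<forall>x\<in>I. \<forall>y\<in>I. (x, y) \<in> ?F \<longrightarrow> x = y" using I by blast
      have "w \<notin> I"
      proof
        assume "w \<in> I"
        hence "w = x" using indI True w(3) by blast
        thus False using w(2) by simp
      qed
      moreover have "w \<in> ?S" using w x by auto
      ultimately have wA: "w \<in> ?A" by blast
      have "(w, x) \<in> ?F \<union> Id_on X" using w(3) by (rule UnI1)
      thus ?thesis using wA by (rule ImageI)
    qed
  qed
  show "cbounded X C (T G)"
  proof (cases "?A = {}")
    case True
    have "?S \<subseteq> {}" using cover unfolding True Image_empty2 .
    hence "T G = {}" using TS by blast
    thus ?thesis unfolding cbounded_def using emptyC by simp
  next
    case False
    let ?E = "?F \<union> Id_on X"
    have E: "?E \<in> C" by (intro un F idC)
    have mA: "meshy X C ?A" unfolding meshy_def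
    proof (intro conjI bexI[OF _ E])
      show "?A \<subseteq> X" by blast
      show "{x\<in>X. ?E `` {x} \<subseteq> ?A} = {}"
      proof (rule ccontr)
        assume "{x\<in>X. ?E `` {x} \<subseteq> ?A} \<noteq> {}"
        then obtain y where y: "y \<in> X" "?E `` {y} \<subseteq> ?A" by blast
        hence yA: "y \<in> ?A" by blast
        have "insert y I \<in> ?Ind"
        proof -
          have "\<forall>i\<in>I. (y, i) \<in> ?F \<longrightarrow> i = y"
          proof (intro ballI impI)
            fix i assume "i \<in> I" "(y, i) \<in> ?F"
            hence "i \<in> ?E `` {y}" by blast
            thus "i = y" using y \<open>i \<in> I\<close> by blast
          qed
          moreover hence "\<forall>i\<in>I. (i, y) \<in> ?F \<longrightarrow> i = y" by auto
          ultimately have a12: "\<forall>i\<in>I. (y, i) \<in> ?F \<longrightarrow> i = y" "\<forall>i\<in>I. (i, y) \<in> ?F \<longrightarrow> i = y" .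
          have Isub: "I \<subseteq> ?S" and indI: "\<forall>x\<in>I. \<forall>z\<in>I. (x, z) \<in> ?F \<longrightarrow> x = z"
            using I by blast+
          have "insert y I \<subseteq> ?S" using Isub yA by blast
          moreover have "\<forall>x\<in>insert y I. \<forall>z\<in>insert y I. (x, z) \<in> ?F \<longrightarrow> x = z"
            using indI a12 by blast
          ultimately show ?thesis by (rule CollectI[of _ "insert y I", OF conjI])
        qed
        moreover have "I \<subseteq> insert y I" by blast
        ultimately have "insert y I = I" using max by blast
        thus False using yA by blast
      qed
    qed
    have "\<exists>x0 x1. x0 \<in> X \<and> x1 \<in> X \<and> x0 \<noteq> x1"
    proof (rule ccontr)
      assume "\<not> ?thesis"
      hence "X \<times> X \<subseteq> Id_on X" by blast
      thus False using ub down[OF idC] unfolding cbounded_def by blast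
    qed
    then obtain x0 x1 where x01: "x0 \<in> X" "x1 \<in> X" "x0 \<noteq> x1" by blast
    let ?E1 = "Id_on X \<union> {(x0, x1)}"
    have "{(x0, x1)} \<in> C" using cc x01 unfolding coarse_connected_def by blast
    hence E1: "?E1 \<in> C" by (intro un idC)
    have m0: "meshy X C {x0}" unfolding meshy_def
    proof (intro conjI bexI[OF _ E1])
      show "{x0} \<subseteq> X" using x01 by blast
      show "{x\<in>X. ?E1 `` {x} \<subseteq> {x0}} = {}" using x01 by blast
    qed
    have "?A \<in> meshy_family X C" "{x0} \<in> meshy_family X C"
      using False mA m0 unfolding meshy_family_def by auto
    hence "{(?A, {x0})} \<in> exp_coarse X C"
      using mc unfolding coarse_connected_def subspace_coarse_def by blast
    then obtain H where H: "H \<in> C" "{(?A, {x0})} \<subseteq> expE X H" using exp_char by blast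
    hence "?A \<subseteq> H `` {x0}" unfolding expE_def by blast
    moreover have "cbounded X C {x0}" using x01 down[OF idC, of "{x0} \<times> {x0}"] unfolding cbounded_def by blast
    ultimately have "cbounded X C ?A" using bdd_sub[OF bdd_img[OF _ H(1)]] by blast
    hence bE: "cbounded X C (?E `` ?A)" using bdd_img[OF _ E] by blast
    have "T G \<subseteq> ?E `` ?A" by (rule subset_trans[OF TS cover])
    thus ?thesis by (rule bdd_sub[OF bE])
  qed
qed

end

theorem mainTheorem20:
  fixes X :: "'a set" and C :: "('a \<times> 'a) set set"
  assumes "coarse_structure X C"
    and "coarse_connected X C"
    and "\<not> cbounded X C X"
  shows "(thin X C \<longleftrightarrow>
            coarse_connected (meshy_family X C)
              (subspace_coarse (exp_coarse X C) (meshy_family X C)))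
       \<and> (thin X C \<longleftrightarrow>
            asymorphic_embedding X C (Pow X) (exp_coarse X C) (\<lambda>x. X - {x}))"
proof -
  interpret cs X C using assms(1) by unfold_locales
  have 1: "thin X C \<longleftrightarrow> Tb" using thin_Tb Tb_thin by (rule iffI)
  have 2: "Tb \<longleftrightarrow> coarse_connected (meshy_family X C)
              (subspace_coarse (exp_coarse X C) (meshy_family X C))"
    using Tb_conn[OF _ assms(2)] conn_Tb[OF assms(2,3)] by (rule iffI)
  have 3: "Tb \<longleftrightarrow> asymorphic_embedding X C (Pow X) (exp_coarse X C) (\<lambda>x. X - {x})"
    using Tb_asym asym_Tb by (rule iffI)
  show ?thesis unfolding 1 using 2 3 by (rule conjI)
qed

end
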